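(* Let $S,T$ be numberings of shape $\lambda\vdash n$, let $1\le i\le \ell(\lambda)-1$, and let $Q$ be a nonempty subset of the entries in row $i+1$ of $S$. Define \[ \gamma_Q^T(S)=\sum_{U\in \Xi_{i,Q}(S)}\sigma_{U,T}\,a_U\in \widetilde{\mathcal M}^T . \] Then $\gamma_Q^T(S)\in\ker\Psi^T$.
   Context: Permutations in $\mathfrak S_n$ act on $[n]$, products are compositions $(\sigma\tau)(k)=\sigma(\tau(k))$. A numbering of shape $\lambda\vdash n$ is a filling of the Young diagram of $\lambda$ (rows indexed top to bottom; $\ell(\lambda)$ = number of rows) with $1,\dots,n$, each exactly once. For $\pi\in\mathfrak S_n$, $\pi\cdot T$ replaces each entry $k$ by $\pi(k)$; $\sigma_{T,S}$ is the unique permutation with $\sigma_{T,S}\cdot T=S$. $R(T)$, $C(T)$ are the row and column groups; $a_T=\sum_{\rho\in R(T)}\rho$, $b_T=\sum_{\zeta\in C(T)}\operatorname{sgn}(\zeta)\zeta$. Let $\widetilde{\mathcal M}^T=a_T\,\mathbb C[\mathfrak S_n]$ be the right $\mathbb C[\mathfrak S_n]$-submodule generated by $a_T$ (note $\sigma_{U,T}a_U=a_T\sigma_{U,T}\in\widetilde{\mathcal M}^T$), and let $\Psi^T:\widetilde{\mathcal M}^T\to\mathbb C[\mathfrak S_n]$ be the right-module homomorphism $a_Tx\mapsto b_Ta_Tx$. The set $\Xi_{i,Q}(S)$ consists of the numberings obtained from $S$ as follows, one for each pair $(A,B)$ with $A\subseteq Q$, $B$ a subset of the entries of row $i$ of $S$,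 and $|A|=|B|$ (possibly $A=B=\emptyset$): the entries of $A$ are moved to the positions of row $i$ previously occupied by $B$, and the entries of $B$ to the positions of row $i+1$ previously occupied by $A$, preserving relative order (the $k$-th leftmost element of $A$ goes to the position of the $k$-th leftmost element of $B$ and vice versa). *)

theory Defs
  imports Complex_Main "HOL-Combinatorics.Permutations" "HOL-Library.Function_Algebras"
begin

(* Rows and columns are 1-indexed; row r has length lam!(r-1). *)
definition cells :: "nat list \<Rightarrow> (nat \<times> nat) set" where
  "cells lam = {(r,c). 1 \<le> r \<and> r \<le> length lam \<and> 1 \<le> c \<and> c \<le> lam ! (r - 1)}"

definition is_partition :: "nat list \<Rightarrow> nat \<Rightarrow> bool" where
  "is_partition lam n \<longleftrightarrow> sorted_wrt (\<ge>) lam \<and> (\<forall>x\<in>set lam. 0 < x) \<and> sum_list lam = n"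

definition numbering :: "nat \<Rightarrow> nat list \<Rightarrow> (nat \<times> nat \<Rightarrow> nat) \<Rightarrow> bool" where
  "numbering n lam T \<longleftrightarrow> bij_betw T (cells lam) {1..n}"

definition row_entries :: "nat list \<Rightarrow> (nat \<times> nat \<Rightarrow> nat) \<Rightarrow> nat \<Rightarrow> nat set" where
  "row_entries lam T r = T ` {x \<in> cells lam. fst x = r}"

definition col_entries :: "nat list \<Rightarrow> (nat \<times> nat \<Rightarrow> nat) \<Rightarrow> nat \<Rightarrow> nat set" where
  "col_entries lam T c = T ` {x \<in> cells lam. snd x = c}"

definition perms :: "nat \<Rightarrow> (nat \<Rightarrow> nat) set" where
  "perms n = {p. p permutes {1..n}}"

definition row_group :: "nat \<Rightarrow> nat list \<Rightarrow> (nat \<times> nat \<Rightarrow> nat) \<Rightarrow> (nat \<Rightarrow> nat) set" where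
  "row_group n lam T = {p \<in> perms n. \<forall>r. p ` row_entries lam T r = row_entries lam T r}"

definition col_group :: "nat \<Rightarrow> nat list \<Rightarrow> (nat \<times> nat \<Rightarrow> nat) \<Rightarrow> (nat \<Rightarrow> nat) set" where
  "col_group n lam T = {p \<in> perms n. \<forall>c. p ` col_entries lam T c = col_entries lam T c}"

(* group algebra C[S_n]: functions (nat => nat) => complex supported on perms n *)
type_synonym galg = "(nat \<Rightarrow> nat) \<Rightarrow> complex"

definition CS :: "nat \<Rightarrow> galg set" where
  "CS n = {x. \<forall>g. g \<notin> perms n \<longrightarrow> x g = 0}"

definition delta :: "(nat \<Rightarrow> nat) \<Rightarrow> galg" where
  "delta p = (\<lambda>q. if q = p then 1 else 0)"

(* product in C[S_n]; (sigma tau)(k) = sigma (tau k), i.e. sigma \<circ> tau *)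
definition gmult :: "nat \<Rightarrow> galg \<Rightarrow> galg \<Rightarrow> galg" where
  "gmult n x y = (\<lambda>g. if g \<in> perms n then (\<Sum>h\<in>perms n. x h * y (inv h \<circ> g)) else 0)"

definition a_elt :: "nat \<Rightarrow> nat list \<Rightarrow> (nat \<times> nat \<Rightarrow> nat) \<Rightarrow> galg" where
  "a_elt n lam T = (\<lambda>g. if g \<in> row_group n lam T then 1 else 0)"

definition b_elt :: "nat \<Rightarrow> nat list \<Rightarrow> (nat \<times> nat \<Rightarrow> nat) \<Rightarrow> galg" where
  "b_elt n lam T = (\<lambda>g. if g \<in> col_group n lam T then of_int (sign g) else 0)"

definition sigma :: "nat \<Rightarrow> nat list \<Rightarrow> (nat \<times> nat \<Rightarrow> nat) \<Rightarrow> (nat \<times> nat \<Rightarrow> nat) \<Rightarrow> (nat \<Rightarrow> nat)" where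
  "sigma n lam T S = (THE s. s permutes {1..n} \<and> (\<forall>x\<in>cells lam. s (T x) = S x))"

definition Mt :: "nat \<Rightarrow> nat list \<Rightarrow> (nat \<times> nat \<Rightarrow> nat) \<Rightarrow> galg set" where
  "Mt n lam T = {gmult n (a_elt n lam T) x | x. x \<in> CS n}"

definition Psi :: "nat \<Rightarrow> nat list \<Rightarrow> (nat \<times> nat \<Rightarrow> nat) \<Rightarrow> galg \<Rightarrow> galg" where
  "Psi n lam T m = gmult n (b_elt n lam T) m"

definition ker_Psi :: "nat \<Rightarrow> nat list \<Rightarrow> (nat \<times> nat \<Rightarrow> nat) \<Rightarrow> galg set" where
  "ker_Psi n lam T = {m \<in> Mt n lam T. Psi n lam T m = 0}"

definition cols_of :: "nat list \<Rightarrow> (nat \<times> nat \<Rightarrow> nat) \<Rightarrow> nat \<Rightarrow> nat set \<Rightarrow> nat list" where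
  "cols_of lam S r X = sorted_list_of_set {c. (r,c) \<in> cells lam \<and> S (r,c) \<in> X}"

(* move A (in row i+1) to the positions of B (in row i) and vice versa, order preserving *)
definition swap_num :: "nat list \<Rightarrow> nat \<Rightarrow> (nat \<times> nat \<Rightarrow> nat) \<Rightarrow> nat set \<Rightarrow> nat set \<Rightarrow> (nat \<times> nat \<Rightarrow> nat)" where
  "swap_num lam i S A B =
    (let cB = cols_of lam S i B; cA = cols_of lam S (Suc i) A in
     (\<lambda>(r,c). if r = i \<and> c \<in> set cB then S (Suc i, cA ! (THE k. k < length cB \<and> cB ! k = c))
             else if r = Suc i \<and> c \<in> set cA then S (i, cB ! (THE k. k < length cA \<and> cA ! k = c))
             else S (r,c)))"

definition Xi :: "nat list \<Rightarrow> nat \<Rightarrow> nat set \<Rightarrow> (nat \<times> nat \<Rightarrow> nat) \<Rightarrow> (nat \<times> nat \<Rightarrow> nat) set" where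
  "Xi lam i Q S = {swap_num lam i S A B | A B. A \<subseteq> Q \<and> B \<subseteq> row_entries lam S i \<and> card A = card B}"

definition gamma :: "nat \<Rightarrow> nat list \<Rightarrow> nat \<Rightarrow> nat set \<Rightarrow> (nat \<times> nat \<Rightarrow> nat) \<Rightarrow> (nat \<times> nat \<Rightarrow> nat) \<Rightarrow> galg" where
  "gamma n lam i Q T S = (\<Sum>U\<in>Xi lam i Q S. gmult n (delta (sigma n lam U T)) (a_elt n lam U))"

end

theory Submission
  imports Defs
begin


lemma sum_fun_apply: "(sum F I) x = (\<Sum>i\<in>I. F i x)"
  by (induction I rule: infinite_finite_induct) auto

lemma perms_finite: "finite (perms n)"
  unfolding perms_def by (rule finite_permutations) simp

lemma perms_comp: "p \<in> perms n \<Longrightarrow> q \<in> perms n \<Longrightarrow> p \<circ> q \<in> perms n"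
  unfolding perms_def by (simp add: permutes_compose)

lemma perms_inv: "p \<in> perms n \<Longrightarrow> inv p \<in> perms n"
  unfolding perms_def by (simp add: permutes_inv)

lemma perms_bij: "p \<in> perms n \<Longrightarrow> bij p"
  unfolding perms_def by (simp add: permutes_bij)

lemma perms_inv_o: "p \<in> perms n \<Longrightarrow> p \<circ> inv p = id" "p \<in> perms n \<Longrightarrow> inv p \<circ> p = id"
  unfolding perms_def by (simp_all add: permutes_inv_o)

lemma perms_inv_inv: "p \<in> perms n \<Longrightarrow> inv (inv p) = p"
  unfolding perms_def by (simp add: permutes_inv_inv)

lemma perms_inv_comp: "p \<in> perms n \<Longrightarrow> q \<in> perms n \<Longrightarrow> inv (p \<circ> q) = inv q \<circ> inv p"
  by (simp add: o_inv_distrib perms_bij)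

lemma perms_cancel:
  assumes "p \<in> perms n"
  shows "inv p \<circ> (p \<circ> q) = q" "p \<circ> (inv p \<circ> q) = q" "q \<circ> p \<circ> inv p = q" "q \<circ> inv p \<circ> p = q"
    "inv p \<circ> p \<circ> q = q" "p \<circ> inv p \<circ> q = q" "q \<circ> (p \<circ> inv p) = q" "q \<circ> (inv p \<circ> p) = q"
  using perms_inv_o[OF assms] by (simp_all add: comp_assoc[symmetric]) (simp_all add: comp_assoc)

lemma perms_comp_iff: "p \<in> perms n \<Longrightarrow> (p \<circ> q \<in> perms n) = (q \<in> perms n)"
proof
  assume "p \<in> perms n" "p \<circ> q \<in> perms n"
  then have "inv p \<circ> (p \<circ> q) \<in> perms n" by (simp add: perms_comp perms_inv)
  then show "q \<in> perms n" using \<open>p \<in> perms n\<close> by (simp add: perms_cancel)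
qed (simp add: perms_comp)

lemma perms_comp_iff2: "p \<in> perms n \<Longrightarrow> (q \<circ> p \<in> perms n) = (q \<in> perms n)"
proof
  assume "p \<in> perms n" "q \<circ> p \<in> perms n"
  then have "(q \<circ> p) \<circ> inv p \<in> perms n" by (simp add: perms_comp perms_inv)
  then show "q \<in> perms n" using \<open>p \<in> perms n\<close> by (simp add: perms_cancel)
qed (simp add: perms_comp)

lemma gmult_CS: "gmult n x y \<in> CS n"
  unfolding CS_def gmult_def by auto

lemma gmult_out: "g \<notin> perms n \<Longrightarrow> gmult n x y g = 0"
  unfolding gmult_def by auto

lemma gmult_in: "g \<in> perms n \<Longrightarrow> gmult n x y g = (\<Sum>h\<in>perms n. x h * y (inv h \<circ> g))"
  unfolding gmult_def by auto

lemma gmult_assoc: "gmult n (gmult n x y) z = gmult n x (gmult n y z)"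
proof
  fix g
  show "gmult n (gmult n x y) z g = gmult n x (gmult n y z) g"
  proof (cases "g \<in> perms n")
    case False then show ?thesis by (simp add: gmult_out)
  next
    case g: True
    have "gmult n (gmult n x y) z g = (\<Sum>h\<in>perms n. (\<Sum>k\<in>perms n. x k * y (inv k \<circ> h)) * z (inv h \<circ> g))"
      by (simp add: gmult_in g)
    also have "\<dots> = (\<Sum>k\<in>perms n. \<Sum>h\<in>perms n. x k * (y (inv k \<circ> h) * z (inv h \<circ> g)))"
      by (subst sum.swap) (simp add: sum_distrib_right mult.assoc)
    also have "\<dots> = (\<Sum>k\<in>perms n. \<Sum>h'\<in>perms n. x k * (y h' * z (inv h' \<circ> (inv k \<circ> g))))"
    proof (rule sum.cong[OF refl])
      fix k assume k: "k \<in> perms n"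
      show "(\<Sum>h\<in>perms n. x k * (y (inv k \<circ> h) * z (inv h \<circ> g))) =
            (\<Sum>h'\<in>perms n. x k * (y h' * z (inv h' \<circ> (inv k \<circ> g))))"
      proof (rule sum.reindex_bij_witness[of _ "\<lambda>h'. k \<circ> h'" "\<lambda>h. inv k \<circ> h"])
        fix h assume h: "h \<in> perms n"
        then show "k \<circ> (inv k \<circ> h) = h" "inv k \<circ> h \<in> perms n"
          using k by (simp_all add: perms_cancel perms_comp perms_inv)
        have "inv (inv k \<circ> h) = inv h \<circ> k" using k h perms_inv_comp[OF perms_inv[OF k] h] by (simp add: perms_inv_inv)
        then show "x k * (y (inv k \<circ> h) * z (inv (inv k \<circ> h) \<circ> (inv k \<circ> g))) = x k * (y (inv k \<circ> h) * z (inv h \<circ> g))"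
          using k by (simp add: perms_cancel comp_assoc)
      next
        fix h' assume h': "h' \<in> perms n"
        then show "inv k \<circ> (k \<circ> h') = h'" "k \<circ> h' \<in> perms n"
          using k by (simp_all add: perms_cancel perms_comp)
      qed
    qed
    also have "\<dots> = gmult n x (gmult n y z) g"
      using g by (simp add: gmult_in perms_comp perms_inv sum_distrib_left)
    finally show ?thesis .
  qed
qed

lemma gmult_sum_left: "gmult n (sum F I) y = sum (\<lambda>i. gmult n (F i) y) I"
proof
  fix g show "gmult n (sum F I) y g = sum (\<lambda>i. gmult n (F i) y) I g"
    by (cases "g \<in> perms n") (simp_all add: gmult_in gmult_out sum_fun_apply sum_distrib_right, rule sum.swap)
qed

lemma gmult_sum_right: "gmult n x (sum F I) = sum (\<lambda>i. gmult n x (F i)) I"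
proof
  fix g show "gmult n x (sum F I) g = sum (\<lambda>i. gmult n x (F i)) I g"
    by (cases "g \<in> perms n") (simp_all add: gmult_in gmult_out sum_fun_apply sum_distrib_left, rule sum.swap)
qed

lemma gmult_scale_left: "gmult n (\<lambda>g. c * x g) y = (\<lambda>g. c * gmult n x y g)"
  by (rule ext) (simp add: gmult_def sum_distrib_left mult.assoc)

lemma gmult_scale_right: "gmult n x (\<lambda>g. c * y g) = (\<lambda>g. c * gmult n x y g)"
  by (rule ext) (simp add: gmult_def sum_distrib_left mult.left_commute)

lemma gmult_delta_left:
  assumes p: "p \<in> perms n"
  shows "gmult n (delta p) x = (\<lambda>g. if g \<in> perms n then x (inv p \<circ> g) else 0)"
proof
  fix g show "gmult n (delta p) x g = (if g \<in> perms n then x (inv p \<circ> g) else 0)"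
  proof (cases "g \<in> perms n")
    case True
    then have "gmult n (delta p) x g = (\<Sum>h\<in>perms n. if h = p then x (inv h \<circ> g) else 0)"
      by (auto simp: gmult_in delta_def intro!: sum.cong)
    then show ?thesis using True p by (simp add: perms_finite)
  qed (simp add: gmult_out)
qed

lemma inv_comp_eq: "h \<in> perms n \<Longrightarrow> g \<in> perms n \<Longrightarrow> p \<in> perms n \<Longrightarrow> (inv h \<circ> g = p) = (h = g \<circ> inv p)"
  by (metis (no_types, opaque_lifting) comp_id fun.map_comp perms_inv_o)

lemma gmult_delta_right:
  assumes p: "p \<in> perms n"
  shows "gmult n x (delta p) = (\<lambda>g. if g \<in> perms n then x (g \<circ> inv p) else 0)"
proof
  fix g show "gmult n x (delta p) g = (if g \<in> perms n then x (g \<circ> inv p) else 0)"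
  proof (cases "g \<in> perms n")
    case True
    then have "gmult n x (delta p) g = (\<Sum>h\<in>perms n. if h = g \<circ> inv p then x h else 0)"
      using p by (auto simp: gmult_in delta_def inv_comp_eq intro!: sum.cong)
    also have "\<dots> = x (g \<circ> inv p)" using True p by (simp add: perms_finite perms_comp perms_inv)
    finally show ?thesis using True by simp
  qed (simp add: gmult_out)
qed



lemma numbering_inj: "numbering n lam S \<Longrightarrow> inj_on S (cells lam)"
  unfolding numbering_def bij_betw_def by simp

lemma numbering_img: "numbering n lam S \<Longrightarrow> S ` cells lam = {1..n}"
  unfolding numbering_def bij_betw_def by simp

lemma numbering_eq: "numbering n lam S \<Longrightarrow> x \<in> cells lam \<Longrightarrow> y \<in> cells lam \<Longrightarrow> (S x = S y) = (x = y)"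
  using numbering_inj inj_on_eq_iff by metis

lemma sigma_unique:
  assumes U: "numbering n lam U" and s: "s permutes {1..n}" and sV: "\<forall>x\<in>cells lam. s (U x) = V x"
  shows "sigma n lam U V = s"
  unfolding sigma_def
proof (rule the_equality)
  show "s permutes {1..n} \<and> (\<forall>x\<in>cells lam. s (U x) = V x)" using s sV by simp
next
  fix s' assume s': "s' permutes {1..n} \<and> (\<forall>x\<in>cells lam. s' (U x) = V x)"
  show "s' = s"
  proof
    fix v show "s' v = s v"
    proof (cases "v \<in> {1..n}")
      case True
      then obtain x where "x \<in> cells lam" "v = U x" using numbering_img[OF U] by blast
      then show ?thesis using s' sV by simp
    next
      case False then show ?thesis using s s' by (metis permutes_not_in)
    qed
  qed
qed

lemma sigma_exists:
  assumes U: "numbering n lam U" and V: "numbering n lam V"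
  shows "\<exists>s. s permutes {1..n} \<and> (\<forall>x\<in>cells lam. s (U x) = V x)"
proof -
  define s where "s = (\<lambda>v. if v \<in> {1..n} then V (inv_into (cells lam) U v) else v)"
  have b1: "bij_betw (inv_into (cells lam) U) {1..n} (cells lam)"
    using U unfolding numbering_def by (rule bij_betw_inv_into)
  have b2: "bij_betw V (cells lam) {1..n}" using V unfolding numbering_def .
  have "bij_betw (V \<circ> inv_into (cells lam) U) {1..n} {1..n}" using bij_betw_trans[OF b1 b2] .
  then have "bij_betw s {1..n} {1..n}"
    by (rule bij_betw_cong[THEN iffD1, rotated]) (simp add: s_def)
  then have "s permutes {1..n}" by (rule bij_imp_permutes) (auto simp: s_def)
  moreover have "\<forall>x\<in>cells lam. s (U x) = V x"
  proof
    fix x assume x: "x \<in> cells lam"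
    then have "U x \<in> {1..n}" using numbering_img[OF U] by blast
    then show "s (U x) = V x" using x numbering_inj[OF U] by (simp add: s_def)
  qed
  ultimately show ?thesis by blast
qed

lemma sigma_prop:
  assumes "numbering n lam U" "numbering n lam V"
  shows "sigma n lam U V permutes {1..n}" "\<forall>x\<in>cells lam. sigma n lam U V (U x) = V x"
  using sigma_exists[OF assms] sigma_unique[OF assms(1)] by metis+

lemma row_entries_conj: "\<forall>x\<in>cells lam. V x = p (U x) \<Longrightarrow> row_entries lam V r = p ` row_entries lam U r"
  unfolding row_entries_def by (auto simp: image_image)

lemma col_entries_conj: "\<forall>x\<in>cells lam. V x = p (U x) \<Longrightarrow> col_entries lam V r = p ` col_entries lam U r"
  unfolding col_entries_def by (auto simp: image_image)

lemma conj_group: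
  assumes p: "p \<in> perms n" and F: "\<And>r. F r = p ` E r"
  shows "(g \<in> perms n \<and> (\<forall>r. g ` F r = F r)) \<longleftrightarrow>
         (inv p \<circ> g \<circ> p \<in> perms n \<and> (\<forall>r. (inv p \<circ> g \<circ> p) ` E r = E r))"
proof -
  have pp: "(inv p \<circ> g \<circ> p \<in> perms n) = (g \<in> perms n)"
    using p by (simp add: perms_comp_iff perms_comp_iff2 perms_inv)
  have ip: "inj (inv p)" using perms_bij[OF perms_inv[OF p]] bij_is_inj by blast
  have c: "inv p ` p ` A = A" for A using perms_inv_o(2)[OF p] by (simp add: image_comp)
  have "(g ` F r = F r) = ((inv p \<circ> g \<circ> p) ` E r = E r)" for r
  proof -
    have "(g ` F r = F r) = (inv p ` g ` p ` E r = inv p ` p ` E r)"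
      unfolding F using inj_image_eq_iff[OF ip] by metis
    also have "\<dots> = ((inv p \<circ> g \<circ> p) ` E r = E r)" unfolding c by (simp only: image_comp comp_assoc)
    finally show ?thesis .
  qed
  then show ?thesis using pp by blast
qed

lemma perms_permutation: "g \<in> perms n \<Longrightarrow> permutation g"
  unfolding perms_def using permutes_imp_permutation by blast

lemma sign_conj: "p \<in> perms n \<Longrightarrow> g \<in> perms n \<Longrightarrow> sign (inv p \<circ> g \<circ> p) = sign g"
proof -
  assume p: "p \<in> perms n" and g: "g \<in> perms n"
  have "sign (inv p \<circ> g \<circ> p) = sign (inv p \<circ> g) * sign p"
    using perms_permutation[OF perms_comp[OF perms_inv[OF p] g]] perms_permutation[OF p] by (rule sign_compose)
  also have "sign (inv p \<circ> g) = sign (inv p) * sign g"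
    using perms_permutation[OF perms_inv[OF p]] perms_permutation[OF g] by (rule sign_compose)
  also have "sign (inv p) = sign p" using perms_permutation[OF p] by (rule sign_inverse)
  finally show ?thesis by (metis mult.commute mult.left_commute mult.right_neutral sign_idempotent)
qed

lemma a_conj:
  assumes p: "p \<in> perms n" and V: "\<forall>x\<in>cells lam. V x = p (U x)"
  shows "a_elt n lam V g = a_elt n lam U (inv p \<circ> g \<circ> p)"
  using conj_group[OF p, of "row_entries lam V" "row_entries lam U" g] row_entries_conj[of lam V p U, OF V]
  unfolding a_elt_def row_group_def by simp

lemma b_conj:
  assumes p: "p \<in> perms n" and V: "\<forall>x\<in>cells lam. V x = p (U x)"
  shows "b_elt n lam V g = b_elt n lam U (inv p \<circ> g \<circ> p)"
proof -
  have "(g \<in> col_group n lam V) = (inv p \<circ> g \<circ> p \<in> col_group n lam U)"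
    using conj_group[OF p, of "col_entries lam V" "col_entries lam U" g] col_entries_conj[of lam V p U, OF V]
    unfolding col_group_def by simp
  moreover have "g \<in> col_group n lam V \<Longrightarrow> sign (inv p \<circ> g \<circ> p) = sign g"
    using p sign_conj unfolding col_group_def by blast
  ultimately show ?thesis unfolding b_elt_def by simp
qed

lemma a_commute:
  assumes p: "p \<in> perms n" and V: "\<forall>x\<in>cells lam. V x = p (U x)"
  shows "gmult n (delta p) (a_elt n lam U) = gmult n (a_elt n lam V) (delta p)"
proof -
  have *: "a_elt n lam V (g \<circ> inv p) = a_elt n lam U (inv p \<circ> g)" for g
    using a_conj[OF p V, of "g \<circ> inv p"] p by (simp add: perms_cancel comp_assoc)
  show ?thesis using p by (simp add: gmult_delta_left gmult_delta_right fun_eq_iff *)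
qed

lemma b_commute:
  assumes p: "p \<in> perms n" and V: "\<forall>x\<in>cells lam. V x = p (U x)"
  shows "gmult n (delta p) (b_elt n lam U) = gmult n (b_elt n lam V) (delta p)"
proof -
  have *: "b_elt n lam V (g \<circ> inv p) = b_elt n lam U (inv p \<circ> g)" for g
    using b_conj[OF p V, of "g \<circ> inv p"] p by (simp add: perms_cancel comp_assoc)
  show ?thesis using p by (simp add: gmult_delta_left gmult_delta_right fun_eq_iff *)
qed



lemma the_index: "distinct xs \<Longrightarrow> j < length xs \<Longrightarrow> (THE k. k < length xs \<and> xs ! k = xs ! j) = j"
  by (rule the_equality) (auto simp: nth_eq_iff_index_eq)

locale tab =
  fixes n :: nat and lam :: "nat list" and S :: "nat \<times> nat \<Rightarrow> nat"
  assumes S: "numbering n lam S"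
begin

abbreviation R where "R r \<equiv> row_entries lam S r"

lemma R_sub: "R r \<subseteq> {1..n}"
  using numbering_img[OF S] unfolding row_entries_def by blast

lemma R_finite: "finite (R r)"
  using R_sub finite_subset by blast

lemma S_inR: "x \<in> cells lam \<Longrightarrow> (S x \<in> R r) = (fst x = r)"
  unfolding row_entries_def using numbering_eq[OF S] by (auto simp: image_iff)

lemma R_disj: "r \<noteq> r' \<Longrightarrow> R r \<inter> R r' = {}"
  unfolding row_entries_def using numbering_eq[OF S] by auto

lemma cols_of_set:
  "set (cols_of lam S r X) = {c. (r,c) \<in> cells lam \<and> S (r,c) \<in> X}"
proof -
  have "{c. (r,c) \<in> cells lam \<and> S (r,c) \<in> X} \<subseteq> {1..lam!(r-1)}" by (auto simp: cells_def)
  then have "finite {c. (r,c) \<in> cells lam \<and> S (r,c) \<in> X}" using finite_subset by blast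
  then show ?thesis unfolding cols_of_def by simp
qed

lemma cols_of_distinct: "distinct (cols_of lam S r X)"
  unfolding cols_of_def by simp

lemma cols_of_length:
  assumes X: "X \<subseteq> R r"
  shows "length (cols_of lam S r X) = card X"
proof -
  have "length (cols_of lam S r X) = card (set (cols_of lam S r X))"
    using distinct_card[OF cols_of_distinct] by simp
  also have "\<dots> = card X"
  proof (rule bij_betw_same_card)
    show "bij_betw (\<lambda>c. S (r,c)) (set (cols_of lam S r X)) X"
      unfolding bij_betw_def cols_of_set
    proof
      show "inj_on (\<lambda>c. S (r, c)) {c. (r, c) \<in> cells lam \<and> S (r, c) \<in> X}"
        using numbering_eq[OF S] by (auto simp: inj_on_def)
      show "(\<lambda>c. S (r, c)) ` {c. (r, c) \<in> cells lam \<and> S (r, c) \<in> X} = X"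
      proof
        show "X \<subseteq> (\<lambda>c. S (r, c)) ` {c. (r, c) \<in> cells lam \<and> S (r, c) \<in> X}"
        proof
          fix v assume v: "v \<in> X"
          then obtain x where x: "x \<in> cells lam" "fst x = r" "v = S x" using X unfolding row_entries_def by blast
          then show "v \<in> (\<lambda>c. S (r, c)) ` {c. (r, c) \<in> cells lam \<and> S (r, c) \<in> X}"
            using v by (cases x) auto
        qed
      qed auto
    qed
  qed
  finally show ?thesis .
qed

lemma cols_of_mem: "X \<subseteq> R r \<Longrightarrow> v \<in> X \<Longrightarrow> \<exists>j < length (cols_of lam S r X). v = S (r, cols_of lam S r X ! j)"
proof -
  assume X: "X \<subseteq> R r" and v: "v \<in> X"
  then obtain x where x: "x \<in> cells lam" "fst x = r" "v = S x" unfolding row_entries_def by blast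
  then have "snd x \<in> set (cols_of lam S r X)" using v by (cases x) (auto simp: cols_of_set)
  then show ?thesis using x by (metis in_set_conv_nth prod.collapse)
qed

lemma cols_of_nth: "j < length (cols_of lam S r X) \<Longrightarrow> (r, cols_of lam S r X ! j) \<in> cells lam \<and> S (r, cols_of lam S r X ! j) \<in> X"
  using cols_of_set nth_mem by blast

end

locale swp = tab +
  fixes i :: nat and A B :: "nat set"
  assumes A: "A \<subseteq> R (Suc i)" and B: "B \<subseteq> R i" and AB: "card A = card B"
begin

abbreviation cB where "cB \<equiv> cols_of lam S i B"
abbreviation cA where "cA \<equiv> cols_of lam S (Suc i) A"
abbreviation U where "U \<equiv> swap_num lam i S A B"

lemma len_eq: "length cA = length cB"
  using cols_of_length[OF A] cols_of_length[OF B] AB by simp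

lemma U1: "j < length cB \<Longrightarrow> U (i, cB ! j) = S (Suc i, cA ! j)"
  unfolding swap_num_def Let_def using the_index[OF cols_of_distinct] by simp

lemma U2: "j < length cA \<Longrightarrow> U (Suc i, cA ! j) = S (i, cB ! j)"
  unfolding swap_num_def Let_def using the_index[OF cols_of_distinct] by simp

lemma U3: "\<not> (r = i \<and> c \<in> set cB) \<Longrightarrow> \<not> (r = Suc i \<and> c \<in> set cA) \<Longrightarrow> U (r,c) = S (r,c)"
  unfolding swap_num_def Let_def by auto

definition tau where "tau = (\<lambda>v. if v \<in> {1..n} then U (inv_into (cells lam) S v) else v)"

lemma tau_S: "x \<in> cells lam \<Longrightarrow> tau (S x) = U x"
  unfolding tau_def using numbering_img[OF S] numbering_inj[OF S] by auto

lemma AB_disj: "A \<inter> B = {}"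
  using A B R_disj[of "Suc i" i] by auto

lemma tau_B: "v \<in> B \<Longrightarrow> tau v \<in> A \<and> tau (tau v) = v"
proof -
  assume v: "v \<in> B"
  then obtain j where j: "j < length cB" "v = S (i, cB ! j)" using cols_of_mem[OF B] by blast
  have c1: "(i, cB ! j) \<in> cells lam" using cols_of_nth j(1) by blast
  have j': "j < length cA" using j len_eq by simp
  have c2: "(Suc i, cA ! j) \<in> cells lam" "S (Suc i, cA ! j) \<in> A" using cols_of_nth j' by blast+
  have "tau v = S (Suc i, cA ! j)" using tau_S[OF c1] U1[OF j(1)] j by simp
  moreover have "tau (S (Suc i, cA ! j)) = v" using tau_S[OF c2(1)] U2[OF j'] j by simp
  ultimately show ?thesis using c2 by simp
qed

lemma tau_A: "v \<in> A \<Longrightarrow> tau v \<in> B \<and> tau (tau v) = v"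
proof -
  assume v: "v \<in> A"
  then obtain j where j': "j < length cA" "v = S (Suc i, cA ! j)" using cols_of_mem[OF A] by blast
  have c2: "(Suc i, cA ! j) \<in> cells lam" using cols_of_nth j'(1) by blast
  have j: "j < length cB" using j' len_eq by simp
  have c1: "(i, cB ! j) \<in> cells lam" "S (i, cB ! j) \<in> B" using cols_of_nth j by blast+
  have "tau v = S (i, cB ! j)" using tau_S[OF c2] U2[OF j'(1)] j' by simp
  moreover have "tau (S (i, cB ! j)) = v" using tau_S[OF c1(1)] U1[OF j] j' by simp
  ultimately show ?thesis using c1 by simp
qed

lemma tau_other: "v \<notin> A \<Longrightarrow> v \<notin> B \<Longrightarrow> tau v = v"
proof -
  assume v: "v \<notin> A" "v \<notin> B"
  show "tau v = v"
  proof (cases "v \<in> {1..n}")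
    case True
    then obtain x where x: "x \<in> cells lam" "v = S x" using numbering_img[OF S] by blast
    obtain r c where rc: "x = (r,c)" by fastforce
    have "\<not> (r = i \<and> c \<in> set cB)" using v x rc by (auto simp: cols_of_set)
    moreover have "\<not> (r = Suc i \<and> c \<in> set cA)" using v x rc by (auto simp: cols_of_set)
    ultimately show ?thesis using U3 tau_S[OF x(1)] x rc by simp
  qed (auto simp: tau_def)
qed

lemma tau_invol: "tau (tau v) = v"
  using tau_A tau_B tau_other by (metis)

lemma tau_permutes: "tau permutes (A \<union> B)"
proof (rule bij_imp_permutes)
  show "bij_betw tau (A \<union> B) (A \<union> B)"
  proof (rule bij_betw_byWitness[where f' = tau])
    show "\<forall>a\<in>A \<union> B. tau (tau a) = a" "\<forall>a'\<in>A \<union> B. tau (tau a') = a'" using tau_invol by auto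
    show "tau ` (A \<union> B) \<subseteq> A \<union> B" "tau ` (A \<union> B) \<subseteq> A \<union> B" using tau_A tau_B by auto
  qed
qed (simp add: tau_other)

lemma tau_row: "row_entries lam U i = (R i - B) \<union> A"
proof -
  have "row_entries lam U i = tau ` R i"
    using row_entries_conj[of lam U tau S i] tau_S by simp
  also have "\<dots> = (R i - B) \<union> A"
  proof
    show "tau ` R i \<subseteq> R i - B \<union> A"
    proof
      fix w assume "w \<in> tau ` R i"
      then obtain v where v: "v \<in> R i" "w = tau v" by blast
      have "v \<notin> A" using v A R_disj[of i "Suc i"] by auto
      then show "w \<in> R i - B \<union> A" using v tau_B tau_other by (cases "v \<in> B") auto
    qed
    show "R i - B \<union> A \<subseteq> tau ` R i"
    proof
      fix w assume w: "w \<in> R i - B \<union> A"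
      show "w \<in> tau ` R i"
      proof (cases "w \<in> A")
        case True then show ?thesis using tau_A B by (metis image_eqI subsetD)
      next
        case False then show ?thesis using w tau_other by (metis DiffD1 DiffD2 UnE image_eqI)
      qed
    qed
  qed
  finally show ?thesis .
qed

end



definition grp :: "nat \<Rightarrow> (nat \<Rightarrow> nat set) \<Rightarrow> (nat \<Rightarrow> nat) set" where
  "grp n E = {p \<in> perms n. \<forall>r. p ` E r = E r}"

lemma grp_E: "p \<in> grp n E \<Longrightarrow> p ` E r = E r"
  unfolding grp_def by blast

lemma grp_perms: "p \<in> grp n E \<Longrightarrow> p \<in> perms n"
  unfolding grp_def by blast

lemma grp_I: "p \<in> perms n \<Longrightarrow> (\<And>r. p ` E r = E r) \<Longrightarrow> p \<in> grp n E"
  unfolding grp_def by blast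

lemma grp_comp: "p \<in> grp n E \<Longrightarrow> q \<in> grp n E \<Longrightarrow> p \<circ> q \<in> grp n E"
proof (rule grp_I)
  assume p: "p \<in> grp n E" and q: "q \<in> grp n E"
  show "p \<circ> q \<in> perms n" using p q grp_perms perms_comp by blast
  fix r
  have "(p \<circ> q) ` E r = p ` (q ` E r)" by (rule image_comp[symmetric])
  also have "\<dots> = p ` E r" using grp_E[OF q] by (rule arg_cong)
  also have "\<dots> = E r" using grp_E[OF p] .
  finally show "(p \<circ> q) ` E r = E r" .
qed

lemma grp_inv: "p \<in> grp n E \<Longrightarrow> inv p \<in> grp n E"
proof (rule grp_I)
  assume p: "p \<in> grp n E"
  have pn: "p \<in> perms n" using p by (rule grp_perms)
  show "inv p \<in> perms n" using pn by (rule perms_inv)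
  fix r
  have "inv p ` E r = inv p ` (p ` E r)" using grp_E[OF p] by simp
  also have "\<dots> = (inv p \<circ> p) ` E r" by (rule image_comp)
  also have "\<dots> = E r" using perms_inv_o(2)[OF pn] by simp
  finally show "inv p ` E r = E r" .
qed

lemma row_group_grp: "row_group n lam S = grp n (row_entries lam S)"
  unfolding row_group_def grp_def by simp

lemma col_group_grp: "col_group n lam S = grp n (col_entries lam S)"
  unfolding col_group_def grp_def by simp

lemma gmult_zero_right: "gmult n x (\<lambda>g. 0) = (\<lambda>g. 0)"
  by (rule ext) (simp add: gmult_def)

lemma delta_mult:
  assumes p: "p \<in> perms n" and q: "q \<in> perms n"
  shows "gmult n (delta p) (delta q) = delta (p \<circ> q)"
proof
  fix g show "gmult n (delta p) (delta q) g = delta (p \<circ> q) g"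
  proof (cases "g \<in> perms n")
    case True
    have "(inv p \<circ> g = q) = (g = p \<circ> q)" using p by (metis perms_cancel(1) perms_cancel(2))
    then show ?thesis using True p by (simp add: gmult_delta_left[OF p]) (simp add: delta_def)
  next
    case False
    then have "g \<noteq> p \<circ> q" using perms_comp[OF p q] by auto
    then show ?thesis using False p by (simp add: gmult_delta_left[OF p]) (simp add: delta_def)
  qed
qed

locale main = tab +
  fixes i :: nat and Q :: "nat set" and T :: "nat \<times> nat \<Rightarrow> nat"
  assumes part: "is_partition lam n" and Tn: "numbering n lam T"
    and i1: "1 \<le> i" and i2: "i \<le> length lam - 1"
    and Q: "Q \<subseteq> R (Suc i)" and Qne: "Q \<noteq> {}"
begin

definition X where "X = R i \<union> Q"
definition H where "H = {h. h permutes X \<and> h ` R i = R i}"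
definition eH :: galg where "eH = (\<lambda>g. if g \<in> H then 1 else 0)"
definition eX :: galg where "eX = (\<lambda>g. if g permutes X then 1 else 0)"
abbreviation G where "G \<equiv> row_group n lam S"
abbreviation tauU where "tauU U \<equiv> sigma n lam S U"
definition Dsum :: galg where "Dsum = (\<Sum>U\<in>Xi lam i Q S. delta (inv (tauU U)))"

lemma QR: "Q \<inter> R i = {}" using Q R_disj[of "Suc i" i] by auto

lemma X_sub: "X \<subseteq> {1..n}" using R_sub Q unfolding X_def by blast

lemma permX_perms: "p permutes X \<Longrightarrow> p \<in> perms n"
  unfolding perms_def using X_sub permutes_subset by blast

lemma Q_finite: "finite Q" using Q R_finite finite_subset by blast

lemma Xi_elem:
  assumes "U \<in> Xi lam i Q S"
  obtains A B where "A \<subseteq> Q" "B \<subseteq> R i" "card A = card B" "U = swap_num lam i S A B"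
  using assms unfolding Xi_def by blast

lemma Xi_props:
  assumes U: "U \<in> Xi lam i Q S"
  shows "numbering n lam U" "tauU U permutes X" "\<forall>x\<in>cells lam. U x = tauU U (S x)"
    "row_entries lam U i = tauU U ` R i"
proof -
  obtain A B where hAB: "A \<subseteq> Q" "B \<subseteq> R i" "card A = card B" "U = swap_num lam i S A B"
    using U by (rule Xi_elem)
  interpret swp n lam S i A B
    using hAB Q S by unfold_locales auto
  have tX: "tau permutes X"
    by (rule permutes_subset[OF tau_permutes]) (use hAB in \<open>auto simp: X_def\<close>)
  have tn: "tau permutes {1..n}" using tX X_sub by (rule permutes_subset)
  have US: "\<forall>x\<in>cells lam. U x = tau (S x)" using tau_S hAB by simp
  have "bij_betw (tau \<circ> S) (cells lam) {1..n}"
    using bij_betw_trans[OF S[unfolded numbering_def] permutes_imp_bij[OF tn]] .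
  then show Un: "numbering n lam U" unfolding numbering_def
    by (rule bij_betw_cong[THEN iffD1, rotated]) (simp add: US)
  have st: "tauU U = tau" by (rule sigma_unique[OF S tn]) (simp add: US)
  then show "tauU U permutes X" "\<forall>x\<in>cells lam. U x = tauU U (S x)" using tX US by simp_all
  show "row_entries lam U i = tauU U ` R i" using row_entries_conj[of lam U tau S i] US st by simp
qed

lemma Xi_row:
  assumes U: "U \<in> Xi lam i Q S"
  obtains A B where "A \<subseteq> Q" "B \<subseteq> R i" "card A = card B" "U = swap_num lam i S A B"
    "row_entries lam U i = (R i - B) \<union> A"
proof -
  obtain A B where hAB: "A \<subseteq> Q" "B \<subseteq> R i" "card A = card B" "U = swap_num lam i S A B"
    using U by (rule Xi_elem)
  interpret swp n lam S i A B
    using hAB Q S by unfold_locales auto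
  show ?thesis using that hAB tau_row by simp
qed

lemma Xi_inj:
  assumes U: "U \<in> Xi lam i Q S" and U': "U' \<in> Xi lam i Q S"
    and eq: "row_entries lam U i = row_entries lam U' i"
  shows "U = U'"
proof -
  obtain A B where hAB: "A \<subseteq> Q" "B \<subseteq> R i" "U = swap_num lam i S A B" "row_entries lam U i = (R i - B) \<union> A"
    using U by (rule Xi_row) blast
  obtain A' B' where hAB': "A' \<subseteq> Q" "B' \<subseteq> R i" "U' = swap_num lam i S A' B'" "row_entries lam U' i = (R i - B') \<union> A'"
    using U' by (rule Xi_row) blast
  have e: "(R i - B) \<union> A = (R i - B') \<union> A'" using eq hAB hAB' by simp
  have "A = ((R i - B) \<union> A) - R i" using hAB(1) QR by auto
  also have "\<dots> = ((R i - B') \<union> A') - R i" using e by simp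
  also have "\<dots> = A'" using hAB'(1) QR by auto
  finally have A: "A = A'" .
  have "B = R i - ((R i - B) \<union> A)" using hAB(1,2) QR by auto
  also have "\<dots> = R i - ((R i - B') \<union> A')" using e by simp
  also have "\<dots> = B'" using hAB'(1,2) QR by auto
  finally have "B = B'" .
  then show ?thesis using A hAB(3) hAB'(3) by simp
qed

lemma Xi_surj:
  assumes Y: "Y \<subseteq> X" "card Y = card (R i)"
  shows "\<exists>U\<in>Xi lam i Q S. row_entries lam U i = Y"
proof -
  define A where "A = Y \<inter> Q"
  define B where "B = R i - Y"
  have fin: "finite (R i)" "finite Q" using R_finite Q_finite by blast+
  have fY: "finite Y" using finite_subset[OF Y(1) finite_subset[OF X_sub]] by simp
  have "card Y = card (Y \<inter> R i) + card (Y \<inter> Q)"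
  proof -
    have Yeq: "Y = (Y \<inter> R i) \<union> (Y \<inter> Q)" using Y unfolding X_def by auto
    have "card Y = card ((Y \<inter> R i) \<union> (Y \<inter> Q))" using Yeq by (rule arg_cong)
    also have "card ((Y \<inter> R i) \<union> (Y \<inter> Q)) = card (Y \<inter> R i) + card (Y \<inter> Q)"
      by (rule card_Un_disjoint) (use fY QR in auto)
    finally show ?thesis .
  qed
  moreover have "card (R i) = card (Y \<inter> R i) + card (R i - Y)"
    using card_Int_Diff[OF fin(1), of Y] by (simp add: Int_commute)
  ultimately have c: "card A = card B" unfolding A_def B_def using Y(2) by simp
  have "A \<subseteq> Q" "B \<subseteq> R i" unfolding A_def B_def by auto
  then have "swap_num lam i S A B \<in> Xi lam i Q S"
    using c unfolding Xi_def by auto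
  then obtain U where U: "U \<in> Xi lam i Q S" "U = swap_num lam i S A B" by blast
  interpret swp n lam S i A B
    using \<open>A \<subseteq> Q\<close> \<open>B \<subseteq> R i\<close> c Q S by unfold_locales auto
  have "row_entries lam U i = (R i - B) \<union> A" using tau_row U by simp
  also have "\<dots> = Y" using Y unfolding A_def B_def X_def by auto
  finally show ?thesis using U by blast
qed

lemma Xi_finite: "finite (Xi lam i Q S)"
proof -
  have "Xi lam i Q S \<subseteq> (\<lambda>(A,B). swap_num lam i S A B) ` (Pow Q \<times> Pow (R i))"
  proof
    fix U assume "U \<in> Xi lam i Q S"
    then obtain A B where "A \<subseteq> Q" "B \<subseteq> R i" "U = swap_num lam i S A B" by (rule Xi_elem)
    then show "U \<in> (\<lambda>(A,B). swap_num lam i S A B) ` (Pow Q \<times> Pow (R i))" by force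
  qed
  moreover have "finite (Pow Q \<times> Pow (R i))" using Q_finite R_finite by simp
  ultimately show ?thesis using finite_subset by blast
qed

end



context main
begin

lemma H_sub_G: "h \<in> H \<Longrightarrow> h \<in> G"
proof -
  assume h: "h \<in> H"
  then have hX: "h permutes X" and hR: "h ` R i = R i" unfolding H_def by auto
  have hn: "h \<in> perms n" using hX by (rule permX_perms)
  have hX': "h ` X = X" using hX by (rule permutes_image)
  have hQ: "h ` Q = Q"
  proof -
    have "Q = X - R i" unfolding X_def using QR by auto
    moreover have "h ` (X - R i) = h ` X - h ` R i"
      using permutes_inj[OF hX] by (rule image_set_diff)
    ultimately show ?thesis using hX' hR by simp
  qed
  have "h ` R r = R r" for r
  proof (cases "r = i")
    case True then show ?thesis using hR by simp
  next
    case ri: False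
    show ?thesis
    proof (cases "r = Suc i")
      case True
      have "R r = Q \<union> (R r - Q)" using Q True by auto
      moreover have "h ` (R r - Q) = R r - Q"
      proof -
        have "\<forall>v \<in> R r - Q. h v = v"
        proof
          fix v assume v: "v \<in> R r - Q"
          then have "v \<notin> X" unfolding X_def using R_disj[of r i] ri by auto
          then show "h v = v" using permutes_not_in[OF hX] by blast
        qed
        then show ?thesis by auto
      qed
      ultimately show ?thesis using hQ by (metis image_Un)
    next
      case False
      have "\<forall>v \<in> R r. h v = v"
      proof
        fix v assume v: "v \<in> R r"
        then have "v \<notin> X" unfolding X_def using R_disj[of r i] R_disj[of r "Suc i"] ri False Q by auto
        then show "h v = v" using permutes_not_in[OF hX] by blast
      qed
      then show ?thesis by auto
    qed
  qed
  then show "h \<in> G" using hn unfolding row_group_def by simp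
qed

lemma H_finite: "finite H"
proof -
  have "H \<subseteq> perms n" unfolding H_def using permX_perms by blast
  then show ?thesis using perms_finite finite_subset by blast
qed

lemma id_H: "id \<in> H" unfolding H_def by (simp add: permutes_id)

lemma card_H_pos: "card H > 0"
  using H_finite id_H card_gt_0_iff by blast

lemma G_perms: "G \<subseteq> perms n" unfolding row_group_def by auto

lemma E2: "gmult n (a_elt n lam S) eH = (\<lambda>g. of_nat (card H) * a_elt n lam S g)"
proof
  fix g
  show "gmult n (a_elt n lam S) eH g = of_nat (card H) * a_elt n lam S g"
  proof (cases "g \<in> perms n")
    case False
    then show ?thesis using G_perms by (auto simp: gmult_out a_elt_def)
  next
    case g: True
    show ?thesis
    proof (cases "g \<in> G")
      case gG: True
      have "gmult n (a_elt n lam S) eH g = (\<Sum>h\<in>perms n. if inv h \<circ> g \<in> H then 1 else 0)"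
      proof -
        have "a_elt n lam S h * eH (inv h \<circ> g) = (if inv h \<circ> g \<in> H then 1 else 0)" if h: "h \<in> perms n" for h
        proof (cases "inv h \<circ> g \<in> H")
          case True
          then have "inv (inv h \<circ> g) \<in> G" using H_sub_G grp_inv row_group_grp by metis
          then have "g \<circ> inv (inv h \<circ> g) \<in> G" using gG grp_comp row_group_grp by metis
          moreover have "g \<circ> inv (inv h \<circ> g) = h"
            using h g perms_inv_comp[OF perms_inv[OF h] g] perms_inv_inv[OF h] perms_cancel(6)[OF g]
            by (simp add: comp_assoc)
          ultimately show ?thesis using True by (simp add: a_elt_def eH_def)
        qed (simp add: eH_def)
        then show ?thesis using g by (simp add: gmult_in)
      qed
      also have "\<dots> = (\<Sum>k\<in>perms n. if k \<in> H then 1 else 0)"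
      proof (rule sum.reindex_bij_witness[of _ "\<lambda>k. g \<circ> inv k" "\<lambda>h. inv h \<circ> g"])
        fix h assume h: "h \<in> perms n"
        show "inv h \<circ> g \<in> perms n" using h g by (simp add: perms_comp perms_inv)
        show "g \<circ> inv (inv h \<circ> g) = h"
          using h g perms_inv_comp[OF perms_inv[OF h] g] perms_inv_inv[OF h] perms_cancel(6)[OF g]
          by (simp add: comp_assoc)
        show "(if inv h \<circ> g \<in> H then 1 else 0) = (if inv h \<circ> g \<in> H then 1 else (0::complex))" by simp
      next
        fix k assume k: "k \<in> perms n"
        show "g \<circ> inv k \<in> perms n" using k g by (simp add: perms_comp perms_inv)
        show "inv (g \<circ> inv k) \<circ> g = k"
          using k g perms_inv_comp[OF g perms_inv[OF k]] perms_inv_inv[OF k] perms_cancel(8)[OF g]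
          by (simp add: comp_assoc)
      qed
      also have "\<dots> = of_nat (card H)"
      proof -
        have "H \<subseteq> perms n" unfolding H_def using permX_perms by blast
        then have "perms n \<inter> H = H" by blast
        then show ?thesis using perms_finite by (simp add: sum.If_cases)
      qed
      finally show ?thesis using gG by (simp add: a_elt_def)
    next
      case gG: False
      have "a_elt n lam S h * eH (inv h \<circ> g) = 0" if h: "h \<in> perms n" for h
      proof (cases "h \<in> G \<and> inv h \<circ> g \<in> H")
        case True
        then have "h \<circ> (inv h \<circ> g) \<in> G" using H_sub_G grp_comp row_group_grp by metis
        then have "g \<in> G" using perms_cancel(2)[OF h] by simp
        then show ?thesis using gG by simp
      qed (auto simp: a_elt_def eH_def)
      then have "gmult n (a_elt n lam S) eH g = 0" using g by (simp add: gmult_in del: mult_eq_0_iff)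
      then show ?thesis using gG by (simp add: a_elt_def)
    qed
  qed
qed


lemma tauU_perms: "U \<in> Xi lam i Q S \<Longrightarrow> tauU U \<in> perms n"
  using Xi_props(2) permX_perms by blast

lemma E1: "gmult n eH Dsum = eX"
proof
  fix g
  show "gmult n eH Dsum g = eX g"
  proof (cases "g \<in> perms n")
    case False
    then show ?thesis using permX_perms by (auto simp: gmult_out eX_def)
  next
    case g: True
    have "gmult n eH Dsum g = (\<Sum>U\<in>Xi lam i Q S. eH (g \<circ> tauU U))"
    proof -
      have "gmult n eH Dsum = (\<Sum>U\<in>Xi lam i Q S. gmult n eH (delta (inv (tauU U))))"
        unfolding Dsum_def by (rule gmult_sum_right)
      then have "gmult n eH Dsum g = (\<Sum>U\<in>Xi lam i Q S. gmult n eH (delta (inv (tauU U))) g)"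
        by (simp add: sum_fun_apply)
      also have "\<dots> = (\<Sum>U\<in>Xi lam i Q S. eH (g \<circ> tauU U))"
      proof (rule sum.cong[OF refl])
        fix U assume U: "U \<in> Xi lam i Q S"
        have t: "tauU U \<in> perms n" using U by (rule tauU_perms)
        show "gmult n eH (delta (inv (tauU U))) g = eH (g \<circ> tauU U)"
          using g t by (simp add: gmult_delta_right perms_inv perms_inv_inv)
      qed
      finally show ?thesis .
    qed
    also have "\<dots> = eX g"
    proof (cases "g permutes X")
      case gX: True
      have igX: "inv g permutes X" using gX by (rule permutes_inv)
      have RX: "R i \<subseteq> X" unfolding X_def by auto
      have "inv g ` R i \<subseteq> X" using RX permutes_image[OF igX] by blast
      moreover have "card (inv g ` R i) = card (R i)"
        using card_image[OF permutes_inj_on[OF igX]] .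
      ultimately obtain U0 where U0: "U0 \<in> Xi lam i Q S" "row_entries lam U0 i = inv g ` R i"
        using Xi_surj by blast
      have ig: "inv g ` (g ` A) = A" for A
      proof -
        have "inv g ` (g ` A) = (inv g \<circ> g) ` A" by (rule image_comp)
        then show ?thesis using permutes_inv_o(2)[OF gX] by simp
      qed
      have gi: "g ` (inv g ` A) = A" for A
      proof -
        have "g ` (inv g ` A) = (g \<circ> inv g) ` A" by (rule image_comp)
        then show ?thesis using permutes_inv_o(1)[OF gX] by simp
      qed
      have iff: "(g \<circ> tauU U \<in> H) = (U = U0)" if U: "U \<in> Xi lam i Q S" for U
      proof -
        have tX: "tauU U permutes X" using Xi_props(2)[OF U] .
        have gt: "g \<circ> tauU U permutes X" using permutes_compose[OF tX gX] .
        have "((g \<circ> tauU U) ` R i = R i) = (tauU U ` R i = inv g ` R i)"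
        proof
          assume a: "(g \<circ> tauU U) ` R i = R i"
          have "tauU U ` R i = inv g ` (g ` (tauU U ` R i))"
            by (simp only: ig)
          also have "\<dots> = inv g ` R i" using a by (simp only: image_comp)
          finally show "tauU U ` R i = inv g ` R i" .
        next
          assume a: "tauU U ` R i = inv g ` R i"
          have "(g \<circ> tauU U) ` R i = g ` (inv g ` R i)" using a by (simp only: image_comp[symmetric])
          also have "\<dots> = R i" by (simp only: gi)
          finally show "(g \<circ> tauU U) ` R i = R i" .
        qed
        also have "\<dots> = (row_entries lam U i = row_entries lam U0 i)"
          using Xi_props(4)[OF U] U0(2) by simp
        also have "\<dots> = (U = U0)" using Xi_inj[OF U U0(1)] by blast
        finally show ?thesis using gt unfolding H_def by simp
      qed
      have "(\<Sum>U\<in>Xi lam i Q S. eH (g \<circ> tauU U)) = (\<Sum>U\<in>Xi lam i Q S. if U = U0 then 1 else 0)"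
        by (rule sum.cong[OF refl]) (simp add: eH_def iff)
      also have "\<dots> = 1" using Xi_finite U0(1) by simp
      finally show ?thesis using gX by (simp add: eX_def)
    next
      case gX: False
      have "eH (g \<circ> tauU U) = 0" if U: "U \<in> Xi lam i Q S" for U
      proof (rule ccontr)
        assume "eH (g \<circ> tauU U) \<noteq> 0"
        then have "g \<circ> tauU U permutes X" unfolding eH_def H_def by (auto split: if_splits)
        then have "(g \<circ> tauU U) \<circ> inv (tauU U) permutes X"
          using permutes_compose[OF permutes_inv[OF Xi_props(2)[OF U]]] by blast
        then have "g permutes X" using perms_cancel(3)[OF tauU_perms[OF U]] by simp
        then show False using gX by simp
      qed
      then show ?thesis using gX by (simp add: eX_def)
    qed
    finally show ?thesis .
  qed
qed


lemma S_inC: "x \<in> cells lam \<Longrightarrow> (S x \<in> col_entries lam S c) = (snd x = c)"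
  unfolding col_entries_def using numbering_eq[OF S] by (auto simp: image_iff)

lemma cell_above: "(Suc i, c) \<in> cells lam \<Longrightarrow> (i, c) \<in> cells lam"
proof -
  assume a: "(Suc i, c) \<in> cells lam"
  have sw: "sorted_wrt (\<ge>) lam" using part unfolding is_partition_def by simp
  have il: "i < length lam" using i1 i2 by linarith
  have "lam ! (i - 1) \<ge> lam ! i" using sorted_wrt_nth_less[OF sw, of "i - 1" i] i1 il by simp
  then show ?thesis using a i1 il unfolding cells_def by auto
qed

lemma b_transp:
  assumes ct: "ct \<in> col_group n lam S" and sg: "sign ct = -1" and ctc: "ct \<circ> ct = id"
  shows "gmult n (b_elt n lam S) (delta ct) = (\<lambda>g. -1 * b_elt n lam S g)"
proof
  fix g
  have ctn: "ct \<in> perms n" using ct unfolding col_group_def by simp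
  have ict: "inv ct = ct" using ctc by (metis inv_unique_comp)
  show "gmult n (b_elt n lam S) (delta ct) g = -1 * b_elt n lam S g"
  proof (cases "g \<in> perms n")
    case False
    then show ?thesis by (auto simp: gmult_out b_elt_def col_group_def)
  next
    case g: True
    have "b_elt n lam S (g \<circ> ct) = -1 * b_elt n lam S g"
    proof (cases "g \<in> col_group n lam S")
      case True
      then have "g \<circ> ct \<in> col_group n lam S" using ct grp_comp col_group_grp by metis
      moreover have "sign (g \<circ> ct) = sign g * sign ct"
        using perms_permutation[OF g] perms_permutation[OF ctn] by (rule sign_compose)
      ultimately show ?thesis using True sg by (simp add: b_elt_def)
    next
      case False
      have "g \<circ> ct \<notin> col_group n lam S"
      proof
        assume "g \<circ> ct \<in> col_group n lam S"
        then have "(g \<circ> ct) \<circ> ct \<in> col_group n lam S" using ct grp_comp col_group_grp by metis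
        then show False using False ctc by (simp add: comp_assoc)
      qed
      then show ?thesis using False by (simp add: b_elt_def)
    qed
    then show ?thesis using g ctn by (simp add: gmult_delta_right ict)
  qed
qed

lemma deltat_eX:
  assumes t: "t permutes X" and tt: "t \<circ> t = id"
  shows "gmult n (delta t) eX = eX"
proof
  fix g
  have tn: "t \<in> perms n" using t by (rule permX_perms)
  have it: "inv t = t" using tt by (metis inv_unique_comp)
  show "gmult n (delta t) eX g = eX g"
  proof (cases "g \<in> perms n")
    case False
    then show ?thesis using permX_perms by (auto simp: gmult_out eX_def)
  next
    case g: True
    have "(t \<circ> g permutes X) = (g permutes X)"
    proof
      assume "t \<circ> g permutes X"
      then have "t \<circ> (t \<circ> g) permutes X" using permutes_compose t by blast
      then show "g permutes X" using tt by (simp add: comp_assoc[symmetric])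
    qed (rule permutes_compose[OF _ t])
    then show ?thesis using g tn by (simp add: gmult_delta_left it eX_def)
  qed
qed

lemma Z:
  assumes rho: "rho \<in> G"
  shows "gmult n (gmult n (b_elt n lam S) (delta rho)) eX = (\<lambda>g. 0)"
proof -
  let ?b = "b_elt n lam S"
  have rn: "rho \<in> perms n" using rho G_perms by blast
  have brho: "bij rho" using perms_bij[OF rn] .
  have rR: "rho ` R r = R r" for r using rho unfolding row_group_def by simp
  obtain q where q: "q \<in> Q" using Qne by blast
  define q' where "q' = rho q"
  have "q' \<in> R (Suc i)" using q Q rR[of "Suc i"] unfolding q'_def by blast
  then obtain c where c: "(Suc i, c) \<in> cells lam" "q' = S (Suc i, c)"
    unfolding row_entries_def by auto
  have c2: "(i, c) \<in> cells lam" using cell_above[OF c(1)] .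
  define r where "r = S (i, c)"
  have rRi: "r \<in> R i" unfolding r_def row_entries_def using c2 by auto
  have irq: "inv rho q' = q" unfolding q'_def using brho by (simp add: bij_is_inj)
  have irR: "inv rho ` R i = R i" using grp_inv[of rho n "row_entries lam S"] rho
    unfolding row_group_grp grp_def by auto
  define x where "x = inv rho r"
  have xR: "x \<in> R i" unfolding x_def using rRi irR by blast
  define t where "t = Transposition.transpose x q"
  define ct where "ct = Transposition.transpose r q'"
  have rq: "r \<noteq> q'" unfolding r_def c(2) using numbering_eq[OF S c2 c(1)] by simp
  have ctt: "ct \<circ> rho = rho \<circ> t"
    unfolding ct_def t_def x_def using transpose_comp_eq[OF brho, of r q'] irq by simp
  have tX: "t permutes X" unfolding t_def X_def using xR q by (intro permutes_swap_id) auto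
  have tt: "t \<circ> t = id" unfolding t_def by simp
  have ctcc: "ct \<circ> ct = id" unfolding ct_def by simp
  have tn: "t \<in> perms n" using tX by (rule permX_perms)
  have ctn: "ct \<in> perms n"
  proof -
    have "r \<in> {1..n}" "q' \<in> {1..n}" using numbering_img[OF S] c c2 unfolding r_def by blast+
    then show ?thesis unfolding ct_def perms_def by (simp add: permutes_swap_id)
  qed
  have ctC: "ct \<in> col_group n lam S"
    unfolding col_group_def
  proof (intro CollectI conjI allI ctn)
    fix c'
    have "(r \<in> col_entries lam S c') = (q' \<in> col_entries lam S c')"
      unfolding r_def c(2) using S_inC[OF c2] S_inC[OF c(1)] by simp
    then show "ct ` col_entries lam S c' = col_entries lam S c'" unfolding ct_def by simp
  qed
  have sg: "sign ct = -1" unfolding ct_def using rq by (simp add: sign_swap_id)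
  define Zf where "Zf = gmult n (gmult n ?b (delta rho)) eX"
  have "Zf = gmult n (gmult n ?b (delta rho)) (gmult n (delta t) eX)"
    unfolding Zf_def using deltat_eX[OF tX tt] by simp
  also have "\<dots> = gmult n (gmult n ?b (gmult n (delta rho) (delta t))) eX"
    by (simp add: gmult_assoc)
  also have "\<dots> = gmult n (gmult n ?b (delta (ct \<circ> rho))) eX"
    using delta_mult[OF rn tn] ctt by simp
  also have "\<dots> = gmult n (gmult n (gmult n ?b (delta ct)) (delta rho)) eX"
    using delta_mult[OF ctn rn] by (simp add: gmult_assoc)
  also have "\<dots> = gmult n (gmult n (\<lambda>g. -1 * ?b g) (delta rho)) eX"
    using b_transp[OF ctC sg ctcc] by simp
  also have "\<dots> = (\<lambda>g. -1 * Zf g)"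
    unfolding Zf_def by (simp only: gmult_scale_left)
  finally have "Zf = (\<lambda>g. -1 * Zf g)" .
  then have "\<forall>g. Zf g = - Zf g" by (metis mult_minus1)
  then show ?thesis unfolding Zf_def[symmetric] by (simp add: fun_eq_iff)
qed

end


context main
begin

lemma a_sum: "a_elt n lam S = (\<Sum>\<rho>\<in>G. delta \<rho>)"
proof
  fix g
  have fG: "finite G" using G_perms perms_finite finite_subset by blast
  show "a_elt n lam S g = (\<Sum>\<rho>\<in>G. delta \<rho>) g"
    using fG by (simp add: sum_fun_apply delta_def a_elt_def)
qed

lemma E3: "gmult n (b_elt n lam S) (gmult n (a_elt n lam S) eX) = (\<lambda>g. 0)"
proof -
  have "gmult n (b_elt n lam S) (gmult n (a_elt n lam S) eX)
      = (\<Sum>\<rho>\<in>G. gmult n (gmult n (b_elt n lam S) (delta \<rho>)) eX)"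
    unfolding a_sum by (simp add: gmult_sum_left gmult_sum_right gmult_assoc)
  also have "\<dots> = (\<Sum>\<rho>\<in>G. (\<lambda>g. 0))"
    by (rule sum.cong[OF refl]) (rule Z)
  also have "\<dots> = (\<lambda>g. 0)" by (simp add: fun_eq_iff sum_fun_apply)
  finally show ?thesis .
qed

lemma core: "gmult n (b_elt n lam S) (gmult n (a_elt n lam S) Dsum) = (\<lambda>g. 0)"
proof -
  let ?c = "of_nat (card H) :: complex"
  have "gmult n (a_elt n lam S) eX = gmult n (a_elt n lam S) (gmult n eH Dsum)" using E1 by simp
  also have "\<dots> = gmult n (gmult n (a_elt n lam S) eH) Dsum" by (simp add: gmult_assoc)
  also have "\<dots> = gmult n (\<lambda>g. ?c * a_elt n lam S g) Dsum" using E2 by simp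
  also have "\<dots> = (\<lambda>g. ?c * gmult n (a_elt n lam S) Dsum g)" by (rule gmult_scale_left)
  finally have "gmult n (b_elt n lam S) (gmult n (a_elt n lam S) eX)
      = gmult n (b_elt n lam S) (\<lambda>g. ?c * gmult n (a_elt n lam S) Dsum g)" by simp
  also have "\<dots> = (\<lambda>g. ?c * gmult n (b_elt n lam S) (gmult n (a_elt n lam S) Dsum) g)"
    by (rule gmult_scale_right)
  finally have "(\<lambda>g. ?c * gmult n (b_elt n lam S) (gmult n (a_elt n lam S) Dsum) g) = (\<lambda>g. 0)"
    using E3 by simp
  moreover have "?c \<noteq> 0" using card_H_pos by simp
  ultimately show ?thesis by (simp add: fun_eq_iff)
qed

lemma final: "gamma n lam i Q T S \<in> ker_Psi n lam T"
proof -
  define s0 where "s0 = sigma n lam S T"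
  have s0p: "s0 permutes {1..n}" "\<forall>x\<in>cells lam. s0 (S x) = T x"
    unfolding s0_def using sigma_prop[OF S Tn] by auto
  have s0n: "s0 \<in> perms n" using s0p(1) unfolding perms_def by simp
  let ?aS = "a_elt n lam S"
  have trm: "gmult n (delta (sigma n lam U T)) (a_elt n lam U) = gmult n (gmult n (delta s0) ?aS) (delta (inv (tauU U)))"
    if U: "U \<in> Xi lam i Q S" for U
  proof -
    have Un: "numbering n lam U" using Xi_props(1)[OF U] .
    have tn: "tauU U \<in> perms n" using U by (rule tauU_perms)
    have tS: "\<forall>x\<in>cells lam. U x = tauU U (S x)" using Xi_props(3)[OF U] .
    have itn: "inv (tauU U) \<in> perms n" using tn by (rule perms_inv)
    have sU: "sigma n lam U T = s0 \<circ> inv (tauU U)"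
    proof (rule sigma_unique[OF Un])
      show "s0 \<circ> inv (tauU U) permutes {1..n}" using perms_comp[OF s0n itn] unfolding perms_def by simp
      show "\<forall>x\<in>cells lam. (s0 \<circ> inv (tauU U)) (U x) = T x"
      proof
        fix x assume x: "x \<in> cells lam"
        have "inv (tauU U) (U x) = S x" using tS x perms_bij[OF tn] by (simp add: bij_is_inj)
        then show "(s0 \<circ> inv (tauU U)) (U x) = T x" using s0p(2) x by simp
      qed
    qed
    show ?thesis
    proof
      fix g
      show "gmult n (delta (sigma n lam U T)) (a_elt n lam U) g = gmult n (gmult n (delta s0) ?aS) (delta (inv (tauU U))) g"
      proof (cases "g \<in> perms n")
        case False then show ?thesis by (simp add: gmult_out)
      next
        case g: True
        have "inv (s0 \<circ> inv (tauU U)) = tauU U \<circ> inv s0"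
          using perms_inv_comp[OF s0n itn] perms_inv_inv[OF tn] by simp
        then have l: "gmult n (delta (sigma n lam U T)) (a_elt n lam U) g = a_elt n lam U (tauU U \<circ> inv s0 \<circ> g)"
          using g sU perms_comp[OF s0n itn] by (simp add: gmult_delta_left)
        have "a_elt n lam U (tauU U \<circ> inv s0 \<circ> g) = ?aS (inv (tauU U) \<circ> (tauU U \<circ> inv s0 \<circ> g) \<circ> tauU U)"
          using a_conj[OF tn tS] .
        also have "\<dots> = ?aS (inv s0 \<circ> (g \<circ> tauU U))"
          using perms_cancel(1)[OF tn] by (simp add: comp_assoc)
        finally have l2: "a_elt n lam U (tauU U \<circ> inv s0 \<circ> g) = ?aS (inv s0 \<circ> (g \<circ> tauU U))" .
        have "gmult n (gmult n (delta s0) ?aS) (delta (inv (tauU U))) g = gmult n (delta s0) ?aS (g \<circ> tauU U)"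
          using g itn perms_inv_inv[OF tn] by (simp add: gmult_delta_right)
        also have "\<dots> = ?aS (inv s0 \<circ> (g \<circ> tauU U))"
          using s0n perms_comp[OF g tn] by (simp add: gmult_delta_left)
        finally show ?thesis using l l2 by simp
      qed
    qed
  qed
  have gam: "gamma n lam i Q T S = gmult n (gmult n (delta s0) ?aS) Dsum"
    unfolding gamma_def Dsum_def gmult_sum_right using trm by (rule sum.cong[OF refl])
  have TS: "\<forall>x\<in>cells lam. T x = s0 (S x)" using s0p(2) by simp
  have comm: "gmult n (delta s0) ?aS = gmult n (a_elt n lam T) (delta s0)"
    using a_commute[OF s0n TS] .
  have bcomm: "gmult n (delta s0) (b_elt n lam S) = gmult n (b_elt n lam T) (delta s0)"
    using b_commute[OF s0n TS] .
  have gam2: "gamma n lam i Q T S = gmult n (a_elt n lam T) (gmult n (delta s0) Dsum)"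
    using gam comm by (simp add: gmult_assoc)
  have inM: "gamma n lam i Q T S \<in> Mt n lam T"
    unfolding Mt_def using gam2 gmult_CS by blast
  have "Psi n lam T (gamma n lam i Q T S)
      = gmult n (gmult n (b_elt n lam T) (delta s0)) (gmult n ?aS Dsum)"
    unfolding Psi_def gam by (simp add: gmult_assoc)
  also have "\<dots> = gmult n (delta s0) (gmult n (b_elt n lam S) (gmult n ?aS Dsum))"
    by (simp only: bcomm[symmetric] gmult_assoc)
  also have "\<dots> = 0" using core by (simp add: gmult_zero_right zero_fun_def)
  finally show ?thesis using inM unfolding ker_Psi_def by simp
qed

end

theorem lemma2p14:
  fixes n i :: nat and lam :: "nat list" and S T :: "nat \<times> nat \<Rightarrow> nat" and Q :: "nat set"
  assumes "is_partition lam n"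
    and "numbering n lam S" and "numbering n lam T"
    and "1 \<le> i" and "i \<le> length lam - 1"
    and "Q \<subseteq> row_entries lam S (Suc i)" and "Q \<noteq> {}"
  shows "gamma n lam i Q T S \<in> ker_Psi n lam T"
proof -
  interpret main n lam S i Q T
    using assms by unfold_locales auto
  show ?thesis by (rule final)
qed


end
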